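(* Let $p\ge1$ and $n\ge p$ be integers. Then $S_{n,a}=S_{n+1,s}$. More precisely: - If $z$ is an odd eigenfunction of order $n$ with eigenvalue $\Lambda$, then $w(x)=\int_{-1}^x z(\xi)\,d\xi$ is an even eigenfunction of order $n+1$ with eigenvalue $\Lambda$. - Conversely, if $w$ is an even eigenfunction of order $n+1$ with eigenvalue $\Lambda$, then $w'$ is an odd eigenfunction of order $n$ with eigenvalue $\Lambda$.
   Context: Fix an integer $p\ge1$. For an integer $k\ge p$ and real $\Lambda$, the differential operator on $[-1,1]$ is $$L^{2k}(\Lambda)=(-1)^k\frac{d^{2k}}{dx^{2k}}-\Lambda(-1)^{k-p}\frac{d^{2k-2p}}{dx^{2k-2p}}.$$ A real number $\Lambda$ is an eigenvalue of order $k$ if there is a real $z\in C^{2k}[-1,1]$, $z\not\equiv0$, such that: - $L^{2k}(\Lambda)z=0$ on $[-1,1]$, and - $z^{(j)}(\pm1)=0$ for $j=0,\dots,k-1$. Such a $z$ is an eigenfunction of order $k$. $S_{k,s}$ (resp. $S_{k,a}$) is the set of eigenvalues of order $k$ admitting an even (resp. odd) eigenfunction of order $k$. *)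

theory Defs
  imports "HOL-Analysis.Analysis"
begin

fun dk :: "nat \<Rightarrow> (real \<Rightarrow> real) \<Rightarrow> real \<Rightarrow> real" where
  "dk 0 f = f"
| "dk (Suc j) f = (\<lambda>x. vector_derivative (dk j f) (at x within {-1..1}))"

definition Cm_on :: "nat \<Rightarrow> (real \<Rightarrow> real) \<Rightarrow> bool" where
  "Cm_on m f \<longleftrightarrow>
     (\<forall>j<m. \<forall>x\<in>{-1..1}. (dk j f has_vector_derivative dk (Suc j) f x) (at x within {-1..1}))
     \<and> continuous_on {-1..1} (dk m f)"

definition eigenfun :: "nat \<Rightarrow> nat \<Rightarrow> real \<Rightarrow> (real \<Rightarrow> real) \<Rightarrow> bool" where
  "eigenfun p k Lam z \<longleftrightarrow>
     p \<le> k \<and> Cm_on (2*k) z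
     \<and> (\<forall>x\<in>{-1..1}. (-1)^k * dk (2*k) z x - Lam * (-1)^(k-p) * dk (2*k-2*p) z x = 0)
     \<and> (\<forall>j<k. dk j z (-1) = 0 \<and> dk j z 1 = 0)
     \<and> (\<exists>x\<in>{-1..1}. z x \<noteq> 0)"

definition even_on :: "(real \<Rightarrow> real) \<Rightarrow> bool" where
  "even_on z \<longleftrightarrow> (\<forall>x\<in>{-1..1}. z (-x) = z x)"

definition odd_on :: "(real \<Rightarrow> real) \<Rightarrow> bool" where
  "odd_on z \<longleftrightarrow> (\<forall>x\<in>{-1..1}. z (-x) = - z x)"

definition S_s :: "nat \<Rightarrow> nat \<Rightarrow> real set" where
  "S_s p k = {Lam. \<exists>z. eigenfun p k Lam z \<and> even_on z}"

definition S_a :: "nat \<Rightarrow> nat \<Rightarrow> real set" where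
  "S_a p k = {Lam. \<exists>z. eigenfun p k Lam z \<and> odd_on z}"

end

theory Submission
  imports Defs
begin

abbreviation "II \<equiv> {-1..1::real}"

lemma vd_unique:
  assumes "x \<in> II" "(f has_vector_derivative D) (at x within II)"
  shows "vector_derivative f (at x within II) = D"
  using vector_derivative_within_cbox[of "-1" 1 x f D] assms by (simp add: box_real(2))

lemma hvd_cong:
  assumes "x \<in> II" "\<And>y. y \<in> II \<Longrightarrow> f y = g y"
  shows "(f has_vector_derivative D) (at x within II) = (g has_vector_derivative D) (at x within II)"
  using has_vector_derivative_transform[of x II f g D] has_vector_derivative_transform[of x II g f D] assms
  by metis

lemma vd_cong:
  assumes "x \<in> II" "\<And>y. y \<in> II \<Longrightarrow> f y = g y"
  shows "vector_derivative f (at x within II) = vector_derivative g (at x within II)"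
  unfolding vector_derivative_def using hvd_cong[OF assms] by simp

lemma dk_cong:
  assumes "\<And>y. y \<in> II \<Longrightarrow> f y = g y"
  shows "x \<in> II \<Longrightarrow> dk j f x = dk j g x"
proof (induction j arbitrary: x)
  case 0 then show ?case using assms by simp
next
  case (Suc j) then show ?case using vd_cong[of x "dk j f" "dk j g"] by simp
qed

lemma dk_Suc': "dk (Suc j) f = dk j (dk 1 f)"
  by (induction j) auto

lemma dk_add: "dk (i + j) f = dk i (dk j f)"
  by (induction i) auto

lemma Cm_on_Suc:
  "Cm_on (Suc m) f \<longleftrightarrow> (\<forall>x\<in>II. (f has_vector_derivative dk 1 f x) (at x within II)) \<and> Cm_on m (dk 1 f)"
  unfolding Cm_on_def
  apply (simp only: dk_Suc'[symmetric])
  apply (auto simp: less_Suc_eq_0_disj)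
  done

lemma Cm_on_cong:
  assumes "\<And>y. y \<in> II \<Longrightarrow> f y = g y" "Cm_on m f"
  shows "Cm_on m g"
proof -
  have e: "\<And>j x. x \<in> II \<Longrightarrow> dk j g x = dk j f x" using dk_cong assms(1) by metis
  have 1: "(dk j g has_vector_derivative dk (Suc j) g x) (at x within II)" if "j < m" "x \<in> II" for j x
  proof -
    have "(dk j f has_vector_derivative dk (Suc j) f x) (at x within II)"
      using assms(2) that unfolding Cm_on_def by blast
    then show ?thesis using hvd_cong[of x "dk j f" "dk j g"] e that by metis
  qed
  have 2: "continuous_on II (dk m g)"
    using assms(2) unfolding Cm_on_def using continuous_on_eq e by metis
  show ?thesis unfolding Cm_on_def using 1 2 by blast
qed

lemma Cm_on_cont: "Cm_on m f \<Longrightarrow> j \<le> m \<Longrightarrow> continuous_on II (dk j f)"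
  unfolding Cm_on_def
  by (metis continuous_on_eq_continuous_within has_vector_derivative_continuous le_neq_implies_less)

lemma Cm_on_mono: "Cm_on m f \<Longrightarrow> k \<le> m \<Longrightarrow> Cm_on k f"
  unfolding Cm_on_def using Cm_on_cont[of m f k] Cm_on_def by auto


lemma zero_deriv_const:
  assumes "\<And>x. x \<in> II \<Longrightarrow> (f has_vector_derivative 0) (at x within II)" "x \<in> II" "y \<in> II"
  shows "f x = f y"
proof -
  obtain c where "\<And>x. x \<in> II \<Longrightarrow> f x = c"
    using has_vector_derivative_zero_constant[of II f] assms(1) by auto
  then show ?thesis using assms by metis
qed

lemma refl_deriv:
  fixes f f' :: "real \<Rightarrow> real"
  assumes "\<And>y. y \<in> II \<Longrightarrow> (f has_vector_derivative f' y) (at y within II)" "x \<in> II"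
  shows "((\<lambda>x. f (-x)) has_vector_derivative - f' (-x)) (at x within II)"
proof -
  have im: "uminus ` II = II" by auto
  have "(uminus has_vector_derivative (-1)) (at x within II)"
    by (auto intro!: derivative_eq_intros)
  moreover have "(f has_vector_derivative f' (-x)) (at (-x) within uminus ` II)"
    using assms im by auto
  ultimately have "((f \<circ> uminus) has_vector_derivative ((-1) *\<^sub>R f' (-x))) (at x within II)"
    by (rule vector_diff_chain_within)
  then show ?thesis by (simp add: o_def)
qed

lemma parity_step:
  fixes f f' :: "real \<Rightarrow> real" and s :: real
  assumes "\<And>y. y \<in> II \<Longrightarrow> (f has_vector_derivative f' y) (at y within II)"
    and "\<And>y. y \<in> II \<Longrightarrow> f (-y) = s * f y" "x \<in> II"
  shows "f' (-x) = - s * f' x"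
proof -
  have 1: "((\<lambda>x. f (-x)) has_vector_derivative - f' (-x)) (at x within II)"
    using refl_deriv assms by blast
  have "((\<lambda>x. s * f x) has_vector_derivative s * f' x) (at x within II)"
    using assms(1)[OF assms(3)] by (rule has_vector_derivative_mult_right)
  then have 2: "((\<lambda>x. f (-x)) has_vector_derivative s * f' x) (at x within II)"
    using hvd_cong[of x "\<lambda>x. f (-x)" "\<lambda>x. s * f x"] assms(2,3) by auto
  have "- f' (-x) = s * f' x" using vd_unique[OF assms(3) 1] vd_unique[OF assms(3) 2] by simp
  then show ?thesis by simp
qed

lemma parity_dk:
  assumes "Cm_on m f" "\<And>y. y \<in> II \<Longrightarrow> f (-y) = s * f y"
  shows "j \<le> m \<Longrightarrow> x \<in> II \<Longrightarrow> dk j f (-x) = s * (-1)^j * dk j f x"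
proof (induction j arbitrary: x)
  case 0 then show ?case using assms by simp
next
  case (Suc j)
  have d: "\<And>y. y \<in> II \<Longrightarrow> (dk j f has_vector_derivative dk (Suc j) f y) (at y within II)"
    using assms(1) Suc.prems unfolding Cm_on_def by auto
  have "dk (Suc j) f (-x) = - (s * (-1)^j) * dk (Suc j) f x"
    by (rule parity_step[OF d _ Suc.prems(2)]) (use Suc in auto)
  then show ?case by simp
qed

lemma Cm_on_SucI:
  assumes "Cm_on m f" "\<And>x. x \<in> II \<Longrightarrow> (dk m f has_vector_derivative dk (Suc m) f x) (at x within II)"
    "continuous_on II (dk (Suc m) f)"
  shows "Cm_on (Suc m) f"
  using assms unfolding Cm_on_def by (metis less_Suc_eq)


lemma dir2:
  assumes p1: "1 \<le> p" and pn: "p \<le> n"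
    and ew: "eigenfun p (Suc n) Lam w" and ev: "even_on w"
  shows "eigenfun p n Lam (dk 1 w) \<and> odd_on (dk 1 w)"
proof -
  define z where "z = dk 1 w"
  have Cw: "Cm_on (Suc (Suc (2*n))) w" using ew unfolding eigenfun_def by simp
  have eqw: "\<And>x. x \<in> II \<Longrightarrow> (-1)^(Suc n) * dk (Suc (Suc (2*n))) w x
      - Lam * (-1)^(Suc (n-p)) * dk (Suc (Suc (2*n-2*p))) w x = 0"
  proof -
    fix x assume "x \<in> II"
    then have "(-1)^(Suc n) * dk (2*Suc n) w x - Lam * (-1)^(Suc n-p) * dk (2*Suc n-2*p) w x = 0"
      using ew unfolding eigenfun_def by blast
    moreover have "2*Suc n - 2*p = Suc (Suc (2*n-2*p))" "Suc n - p = Suc (n-p)" "2 * Suc n = Suc (Suc (2*n))"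
      using pn by auto
    ultimately show "(-1)^(Suc n) * dk (Suc (Suc (2*n))) w x
      - Lam * (-1)^(Suc (n-p)) * dk (Suc (Suc (2*n-2*p))) w x = 0" by simp
  qed
  have bw: "\<And>j. j < Suc n \<Longrightarrow> dk j w (-1) = 0 \<and> dk j w 1 = 0" using ew unfolding eigenfun_def by blast
  have nzw: "\<exists>x\<in>II. w x \<noteq> 0" using ew unfolding eigenfun_def by blast
  have evw: "\<And>y. y \<in> II \<Longrightarrow> w (-y) = 1 * w y" using ev unfolding even_on_def by simp
  have par: "\<And>j x. j \<le> Suc (Suc (2*n)) \<Longrightarrow> x \<in> II \<Longrightarrow> dk j w (-x) = (-1)^j * dk j w x"
    using parity_dk[OF Cw evw] by simp
  have Cz: "Cm_on (2*n) z"
    using Cw Cm_on_Suc Cm_on_mono z_def by (metis le_SucI order_refl)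
  have dw: "\<And>j x. j < Suc (Suc (2*n)) \<Longrightarrow> x \<in> II \<Longrightarrow> (dk j w has_vector_derivative dk (Suc j) w x) (at x within II)"
    using Cw unfolding Cm_on_def by blast
  define g where "g x = (-1)^n * dk (Suc (2*n)) w x - Lam * (-1)^(n-p) * dk (Suc (2*n-2*p)) w x" for x
  have gd: "(g has_vector_derivative 0) (at x within II)" if "x \<in> II" for x
  proof -
    have "(g has_vector_derivative ((-1)^n * dk (Suc (Suc (2*n))) w x - Lam * (-1)^(n-p) * dk (Suc (Suc (2*n-2*p))) w x)) (at x within II)"
    proof -
      have d1: "(dk (Suc (2*n)) w has_vector_derivative dk (Suc (Suc (2*n))) w x) (at x within II)"
        by (rule dw[OF _ that]) simp
      have d2: "(dk (Suc (2*n-2*p)) w has_vector_derivative dk (Suc (Suc (2*n-2*p))) w x) (at x within II)"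
        by (rule dw[OF _ that]) (use pn in simp)
      show ?thesis unfolding g_def
        by (intro has_vector_derivative_diff has_vector_derivative_mult_right d1 d2)
    qed
    moreover have "(-1)^n * dk (Suc (Suc (2*n))) w x - Lam * (-1)^(n-p) * dk (Suc (Suc (2*n-2*p))) w x = 0"
      using eqw[OF that] by simp
    ultimately show ?thesis by simp
  qed
  have godd: "g (-x) = - g x" if "x \<in> II" for x
  proof -
    have "dk (Suc (2*n)) w (-x) = - dk (Suc (2*n)) w x" using par[of "Suc (2*n)" x] that by simp
    moreover have "dk (Suc (2*n-2*p)) w (-x) = - dk (Suc (2*n-2*p)) w x"
      using par[of "Suc (2*n-2*p)" x] that by simp
    ultimately show ?thesis unfolding g_def by simp
  qed
  have g0: "g x = 0" if "x \<in> II" for x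
  proof -
    have "g x = g 0" using zero_deriv_const[OF gd that] by simp
    moreover have "g 0 = 0" using godd[of 0] by simp
    ultimately show ?thesis by simp
  qed
  have eqz: "\<forall>x\<in>II. (-1)^n * dk (2*n) z x - Lam * (-1)^(n-p) * dk (2*n-2*p) z x = 0"
  proof
    fix x assume "x \<in> II"
    have "dk (2*n) z = dk (Suc (2*n)) w" "dk (2*n-2*p) z = dk (Suc (2*n-2*p)) w"
      unfolding z_def dk_Suc'[symmetric] by simp_all
    then show "(-1)^n * dk (2*n) z x - Lam * (-1)^(n-p) * dk (2*n-2*p) z x = 0"
      using g0[OF \<open>x \<in> II\<close>] unfolding g_def by simp
  qed
  have bz: "\<forall>j<n. dk j z (-1) = 0 \<and> dk j z 1 = 0"
  proof (intro allI impI)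
    fix j assume "j < n"
    then have "dk (Suc j) w (-1) = 0 \<and> dk (Suc j) w 1 = 0" using bw[of "Suc j"] by blast
    then show "dk j z (-1) = 0 \<and> dk j z 1 = 0" unfolding z_def dk_Suc'[symmetric] .
  qed
  have nzz: "\<exists>x\<in>II. z x \<noteq> 0"
  proof (rule ccontr)
    assume "\<not> ?thesis"
    then have "\<And>x. x \<in> II \<Longrightarrow> (w has_vector_derivative 0) (at x within II)"
      using dw[of 0] unfolding z_def by fastforce
    then have "\<And>x. x \<in> II \<Longrightarrow> w x = w (-1)"
      by (rule zero_deriv_const) auto
    moreover have "w (-1) = 0" using bw[of 0] by simp
    ultimately show False using nzw by simp
  qed
  have oz: "odd_on z"
    unfolding odd_on_def z_def using par[of 1] by simp
  show ?thesis unfolding eigenfun_def z_def[symmetric]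
    using pn Cz eqz bz nzz oz by blast
qed


declare dk.simps(2)[simp del]

lemma dir1:
  assumes p1: "1 \<le> p" and pn: "p \<le> n"
    and ez: "eigenfun p n Lam z" and od: "odd_on z"
  shows "eigenfun p (Suc n) Lam (\<lambda>x. integral {-1..x} z) \<and> even_on (\<lambda>x. integral {-1..x} z)"
proof -
  define w where "w = (\<lambda>x. integral {-1..x} z)"
  have Cz: "Cm_on (2*n) z" using ez unfolding eigenfun_def by blast
  have eqz: "\<And>x. x \<in> II \<Longrightarrow> (-1)^n * dk (2*n) z x - Lam * (-1)^(n-p) * dk (2*n-2*p) z x = 0"
    using ez unfolding eigenfun_def by blast
  have bz: "\<And>j. j < n \<Longrightarrow> dk j z (-1) = 0 \<and> dk j z 1 = 0" using ez unfolding eigenfun_def by blast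
  obtain x0 where x0: "x0 \<in> II" "z x0 \<noteq> 0" using ez unfolding eigenfun_def by blast
  have contz: "continuous_on II z" using Cm_on_cont[OF Cz, of 0] by simp
  have hw: "(w has_vector_derivative z x) (at x within II)" if "x \<in> II" for x
    unfolding w_def by (rule integral_has_vector_derivative[OF contz that])
  have d1w: "dk 1 w x = z x" if "x \<in> II" for x
    using vd_unique[OF that hw[OF that]] by (simp add: dk.simps)
  define c where "c = Lam * (-1)^n * (-1)^(n-p)"
  have sq: "((-1::real)^n) * (-1)^n = 1" by (simp add: power_mult_distrib[symmetric])
  have rel: "dk (2*n) z x = c * dk (2*n-2*p) z x" if "x \<in> II" for x
  proof -
    have "(-1)^n * ((-1)^n * dk (2*n) z x) = (-1)^n * (Lam * (-1)^(n-p) * dk (2*n-2*p) z x)"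
      using eqz[OF that] by simp
    then show ?thesis unfolding c_def using sq by (simp add: mult.assoc[symmetric])
  qed
  have lt: "Suc (2*n-2*p) \<le> 2*n" "2*n-2*p < 2*n" using p1 pn by auto
  have dz: "\<And>j x. j < 2*n \<Longrightarrow> x \<in> II \<Longrightarrow> (dk j z has_vector_derivative dk (Suc j) z x) (at x within II)"
    using Cz unfolding Cm_on_def by blast
  have d2n: "(dk (2*n) z has_vector_derivative c * dk (Suc (2*n-2*p)) z x) (at x within II)" if "x \<in> II" for x
  proof -
    have "((\<lambda>x. c * dk (2*n-2*p) z x) has_vector_derivative c * dk (Suc (2*n-2*p)) z x) (at x within II)"
      by (intro has_vector_derivative_mult_right dz lt that)
    then show ?thesis using hvd_cong[OF that, of "dk (2*n) z" "\<lambda>x. c * dk (2*n-2*p) z x"] rel by simp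
  qed
  have r2: "dk (Suc (2*n)) z x = c * dk (Suc (2*n-2*p)) z x" if "x \<in> II" for x
    using vd_unique[OF that d2n[OF that]] by (subst dk.simps(2)) simp
  have Cz1: "Cm_on (Suc (2*n)) z"
  proof (rule Cm_on_SucI[OF Cz])
    show "\<And>x. x \<in> II \<Longrightarrow> (dk (2 * n) z has_vector_derivative dk (Suc (2 * n)) z x) (at x within II)"
      using d2n r2 by simp
    have "continuous_on II (\<lambda>x. c * dk (Suc (2*n-2*p)) z x)"
      by (intro continuous_intros Cm_on_cont[OF Cz lt(1)])
    then show "continuous_on II (dk (Suc (2 * n)) z)"
      using continuous_on_eq r2 by (metis (no_types, lifting))
  qed
  have Cw: "Cm_on (2 * Suc n) w"
  proof -
    have "Cm_on (Suc (2*n)) (dk 1 w)" using Cm_on_cong[OF _ Cz1] d1w by metis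
    moreover have "\<forall>x\<in>II. (w has_vector_derivative dk 1 w x) (at x within II)" using hw d1w by simp
    ultimately have "Cm_on (Suc (Suc (2*n))) w" using Cm_on_Suc by blast
    then show ?thesis by simp
  qed
  have dkw: "dk (Suc j) w x = dk j z x" if "x \<in> II" for j x
    unfolding dk_Suc' by (rule dk_cong[OF d1w that])
  have eqw: "\<forall>x\<in>II. (-1)^(Suc n) * dk (2*Suc n) w x - Lam * (-1)^(Suc n-p) * dk (2*Suc n-2*p) w x = 0"
  proof
    fix x assume x: "x \<in> II"
    have e: "2*Suc n - 2*p = Suc (Suc (2*n-2*p))" "Suc n - p = Suc (n-p)" "2 * Suc n = Suc (Suc (2*n))"
      using pn by auto
    have "dk (2*Suc n) w x = c * dk (Suc (2*n-2*p)) z x" using e(3) dkw[OF x] r2[OF x] by simp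
    moreover have "dk (2*Suc n-2*p) w x = dk (Suc (2*n-2*p)) z x" using e(1) dkw[OF x] by simp
    moreover have "(-1)^(Suc n) * c = Lam * (-1)^(Suc n-p)"
      unfolding c_def e(2) using sq by (simp add: algebra_simps)
    ultimately show "(-1)^(Suc n) * dk (2*Suc n) w x - Lam * (-1)^(Suc n-p) * dk (2*Suc n-2*p) w x = 0"
      by (simp add: mult.assoc[symmetric])
  qed
  have evw: "w (-x) = w x" if "x \<in> II" for x
  proof -
    define h where "h x = w x - w (-x)" for x
    have hd: "(h has_vector_derivative 0) (at x within II)" if "x \<in> II" for x
    proof -
      have "((\<lambda>x. w (-x)) has_vector_derivative - z (-x)) (at x within II)"
        by (rule refl_deriv[OF hw that])
      moreover have "z (-x) = - z x" using od that unfolding odd_on_def by blast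
      ultimately have "((\<lambda>x. w (-x)) has_vector_derivative z x) (at x within II)" by simp
      then have "(h has_vector_derivative z x - z x) (at x within II)"
        unfolding h_def by (intro has_vector_derivative_diff hw that)
      then show ?thesis by simp
    qed
    have "h x = h 0" using zero_deriv_const[OF hd that] by simp
    then show ?thesis unfolding h_def by simp
  qed
  have wm1: "w (-1) = 0" unfolding w_def by simp
  have w1: "w 1 = 0" using evw[of 1] wm1 by simp
  have bw: "\<forall>j<Suc n. dk j w (-1) = 0 \<and> dk j w 1 = 0"
  proof (intro allI impI)
    fix j assume "j < Suc n"
    then show "dk j w (-1) = 0 \<and> dk j w 1 = 0"
    proof (cases j)
      case 0 then show ?thesis using wm1 w1 by simp
    next
      case (Suc i) then show ?thesis using dkw[of "-1" i] dkw[of 1 i] bz[of i] \<open>j < Suc n\<close> by simp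
    qed
  qed
  have nzw: "\<exists>x\<in>II. w x \<noteq> 0"
  proof (rule ccontr)
    assume "\<not> ?thesis"
    then have "\<And>x. x \<in> II \<Longrightarrow> w x = (\<lambda>_. 0) x" by simp
    then have "dk 1 w x0 = dk 1 (\<lambda>_. 0) x0" by (rule dk_cong[OF _ x0(1)])
    also have "\<dots> = 0" using vd_unique[OF x0(1), of "\<lambda>_. 0" 0] by (simp add: dk.simps)
    finally show False using d1w[OF x0(1)] x0(2) by simp
  qed
  show ?thesis unfolding w_def[symmetric] eigenfun_def even_on_def
    using pn Cw eqw bw nzw evw by auto
qed


theorem mainTheorem6:
  fixes p n :: nat
  assumes "1 \<le> p" and "p \<le> n"
  shows "S_a p n = S_s p (Suc n)
    \<and> (\<forall>Lam z. eigenfun p n Lam z \<and> odd_on z \<longrightarrow>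
          eigenfun p (Suc n) Lam (\<lambda>x. integral {-1..x} z)
          \<and> even_on (\<lambda>x. integral {-1..x} z))
    \<and> (\<forall>Lam w. eigenfun p (Suc n) Lam w \<and> even_on w \<longrightarrow>
          eigenfun p n Lam (dk 1 w) \<and> odd_on (dk 1 w))"
proof -
  have A: "\<forall>Lam z. eigenfun p n Lam z \<and> odd_on z \<longrightarrow>
          eigenfun p (Suc n) Lam (\<lambda>x. integral {-1..x} z)
          \<and> even_on (\<lambda>x. integral {-1..x} z)"
    using dir1[OF assms] by blast
  have B: "\<forall>Lam w. eigenfun p (Suc n) Lam w \<and> even_on w \<longrightarrow>
          eigenfun p n Lam (dk 1 w) \<and> odd_on (dk 1 w)"
    using dir2[OF assms] by blast
  have "S_a p n = S_s p (Suc n)"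
    unfolding S_a_def S_s_def using A B by blast
  then show ?thesis using A B by blast
qed

end
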